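(* For all formulas $\varphi,\psi,\vartheta$ the following semantic equivalences hold (in every $\mathcal L$-model): $$\forall(\varphi\Rightarrow\psi).\vartheta\ \equiv\ (\varphi\wedge\forall\Omega.\forall\psi.\vartheta)\vee\forall\Omega.\vartheta,$$ $$\neg\forall(\varphi\Rightarrow\psi).\vartheta\ \equiv\ (\neg\varphi\wedge\neg\forall\Omega.\vartheta)\vee\neg\forall\Omega.\forall\psi.\vartheta.$$
   Context: Fix countable, nonempty, pairwise disjoint sets $\mathrm{AtF}$ (atomic formulas), $\mathrm{AtP}$ (atomic programs) and $I$ (agent names). The formulas $\mathcal L_s$ and programs $\mathcal L_a$ of Type PDL ($\tau$PDL) are generated by $\varphi::=p\mid\neg\varphi\mid\forall A.\varphi\mid \mathsf C_\imath A$ and $A::=a\mid\varphi\mid\varphi\Rightarrow\varphi\mid AA\mid A+A\mid A^*$ with $p\in\mathrm{AtF}$, $a\in\mathrm{AtP}$, $\imath\in I$ (a formula used as a program is a test; $AB$ is sequential composition, $A+B$ choice, $\forall A.\varphi$ is the box $[A]\varphi$). Other connectives are abbreviations, e.g. $\varphi\to\psi:=\forall\varphi.\psi$. $\mathsf{tt}$ is a fixed tautology, $\mathsf{ff}=\neg\mathsf{tt}$, $\Omega:=\mathsf{tt}\Rightarrow\mathsf{tt}$. $\Sigma$ is the set of programs of the forms $a$, $\varphi$, $\varphi\Rightarrow\psi$; $\Sigma^+$ the finite nonempty sequential compositions of elements of $\Sigma$. An $\mathcal L$-model $M$ consists of a nonempty set $W$, a relation $\to_a\subseteq W\times W$ for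 each $a\in\mathrm{AtP}$, a valuation $\rho:\mathrm{AtF}\to2^W$, and for each $\imath\in I$, $w\in W$ a set $\imath^M(w)\subseteq\bigcup\{\to_A:A\in\Sigma^+\}$. Interpretation: $[\![p]\!]=\rho(p)$, $[\![\neg\varphi]\!]=W\setminus[\![\varphi]\!]$, $[\![\forall A.\varphi]\!]=\{w:\forall w'(w\to_Aw'\Rightarrow w'\in[\![\varphi]\!])\}$; $\to_\varphi=\{(w,w):w\in[\![\varphi]\!]\}$, $\to_{AB}=\to_A\circ\to_B$ (first $A$ then $B$), $\to_{A+B}=\to_A\cup\to_B$, $\to_{A^*}=\bigcup_{n\ge0}(\to_A)^n$, $\to_{\varphi\Rightarrow\psi}=\bigcup\{\to_A: A\in\Sigma^+,\ \forall w\in[\![\varphi]\!]\,\forall w'(w\to_Aw'\Rightarrow w'\in[\![\psi]\!])\}$. (Capabilities are interpreted as in the standard relational semantics of $\tau$PDL but play no role here.) $\varphi\equiv\psi$ means $[\![\varphi]\!]=[\![\psi]\!]$ in every $\mathcal L$-model. *)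

theory Defs
  imports "HOL-Library.Countable"
begin

text \<open>Syntax of Type PDL.  'p = atomic formulas, 'a = atomic programs, 'i = agent names.\<close>

datatype ('p, 'a, 'i) fm =
    Atom 'p
  | Neg "('p, 'a, 'i) fm"
  | Box "('p, 'a, 'i) prog" "('p, 'a, 'i) fm"
  | Cap 'i "('p, 'a, 'i) prog"
and ('p, 'a, 'i) prog =
    AProg 'a
  | Test "('p, 'a, 'i) fm"
  | Arr "('p, 'a, 'i) fm" "('p, 'a, 'i) fm"
  | Seq "('p, 'a, 'i) prog" "('p, 'a, 'i) prog"
  | Choice "('p, 'a, 'i) prog" "('p, 'a, 'i) prog"
  | Star "('p, 'a, 'i) prog"

definition Imp :: "('p, 'a, 'i) fm \<Rightarrow> ('p, 'a, 'i) fm \<Rightarrow> ('p, 'a, 'i) fm" where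
  "Imp \<phi> \<psi> = Box (Test \<phi>) \<psi>"

definition Conj :: "('p, 'a, 'i) fm \<Rightarrow> ('p, 'a, 'i) fm \<Rightarrow> ('p, 'a, 'i) fm" where
  "Conj \<phi> \<psi> = Neg (Imp \<phi> (Neg \<psi>))"

definition Disj :: "('p, 'a, 'i) fm \<Rightarrow> ('p, 'a, 'i) fm \<Rightarrow> ('p, 'a, 'i) fm" where
  "Disj \<phi> \<psi> = Imp (Neg \<phi>) \<psi>"

definition tt :: "('p, 'a, 'i) fm" where
  "tt = Imp (Atom undefined) (Atom undefined)"

definition Omega :: "('p, 'a, 'i) prog" where
  "Omega = Arr tt tt"

fun inSigma :: "('p, 'a, 'i) prog \<Rightarrow> bool" where
  "inSigma (AProg a) = True"
| "inSigma (Test \<phi>) = True"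
| "inSigma (Arr \<phi> \<psi>) = True"
| "inSigma _ = False"

inductive SigmaPlus :: "('p, 'a, 'i) prog \<Rightarrow> bool" where
  base: "inSigma A \<Longrightarrow> SigmaPlus A"
| seq: "SigmaPlus A \<Longrightarrow> SigmaPlus B \<Longrightarrow> SigmaPlus (Seq A B)"

text \<open>A model has the world set W = UNIV :: 'w set (nonempty as every HOL type),
  relations R a, valuation V and capability assignments C.  Since the semantic
  clause for arrows is impredicative (it quantifies over all Sigma-plus programs),
  the interpretation (S for formulas, T for programs) is specified as any pair of
  functions satisfying all the semantic clauses.  The clause for capabilities is
  left unconstrained (capabilities play no role here).\<close>

definition is_interp ::
  "('a \<Rightarrow> ('w \<times> 'w) set) \<Rightarrow> ('p \<Rightarrow> 'w set) \<Rightarrow> ('i \<Rightarrow> 'w \<Rightarrow> ('w \<times> 'w) set)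
   \<Rightarrow> (('p, 'a, 'i) fm \<Rightarrow> 'w set) \<Rightarrow> (('p, 'a, 'i) prog \<Rightarrow> ('w \<times> 'w) set) \<Rightarrow> bool" where
  "is_interp R V C S T \<longleftrightarrow>
     (\<forall>p. S (Atom p) = V p) \<and>
     (\<forall>\<phi>. S (Neg \<phi>) = - S \<phi>) \<and>
     (\<forall>A \<phi>. S (Box A \<phi>) = {w. \<forall>w'. (w, w') \<in> T A \<longrightarrow> w' \<in> S \<phi>}) \<and>
     (\<forall>a. T (AProg a) = R a) \<and>
     (\<forall>\<phi>. T (Test \<phi>) = {(w, w) | w. w \<in> S \<phi>}) \<and>
     (\<forall>A B. T (Seq A B) = T A O T B) \<and>
     (\<forall>A B. T (Choice A B) = T A \<union> T B) \<and>
     (\<forall>A. T (Star A) = (\<Union>n. T A ^^ n)) \<and>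
     (\<forall>\<phi> \<psi>. T (Arr \<phi> \<psi>) = \<Union>{T A | A. SigmaPlus A \<and>
         (\<forall>w \<in> S \<phi>. \<forall>w'. (w, w') \<in> T A \<longrightarrow> w' \<in> S \<psi>)}) \<and>
     (\<forall>i w. C i w \<subseteq> \<Union>{T A | A. SigmaPlus A})"

end

theory Submission
  imports Defs
begin

lemma arr_char:
  assumes I: "is_interp R V C S T"
  shows "T (Arr \<phi> \<psi>) = {(w,w'). (w,w') \<in> \<Union>{T A | A. SigmaPlus A} \<and> (w \<in> S \<phi> \<longrightarrow> w' \<in> S \<psi>)}"
proof -
  have TA: "T (Arr \<phi> \<psi>) = \<Union>{T A | A. SigmaPlus A \<and>
         (\<forall>w \<in> S \<phi>. \<forall>w'. (w, w') \<in> T A \<longrightarrow> w' \<in> S \<psi>)}"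
    using I unfolding is_interp_def by (elim conjE) (rule spec2)
  have Tt: "\<And>\<chi> x y. (x,y) \<in> T (Test \<chi>) \<longleftrightarrow> x = y \<and> x \<in> S \<chi>"
    using I unfolding is_interp_def by auto
  have Ts: "\<And>A B x y. (x,y) \<in> T (Seq A B) \<longleftrightarrow> (\<exists>z. (x,z) \<in> T A \<and> (z,y) \<in> T B)"
    using I unfolding is_interp_def by (elim conjE) (simp add: relcomp_unfold)
  have Sn: "\<And>\<chi> w. w \<in> S (Neg \<chi>) \<longleftrightarrow> w \<notin> S \<chi>"
    using I unfolding is_interp_def by simp
  show ?thesis
  proof (rule set_eqI, clarify)
    fix w w'
    show "((w,w') \<in> T (Arr \<phi> \<psi>)) = ((w,w') \<in> {(w,w'). (w,w') \<in> \<Union>{T A | A. SigmaPlus A} \<and> (w \<in> S \<phi> \<longrightarrow> w' \<in> S \<psi>)})"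
    proof
      assume "(w,w') \<in> T (Arr \<phi> \<psi>)"
      then obtain A where "SigmaPlus A" "\<forall>w \<in> S \<phi>. \<forall>w'. (w, w') \<in> T A \<longrightarrow> w' \<in> S \<psi>" "(w,w') \<in> T A"
        unfolding TA by blast
      then show "(w,w') \<in> {(w,w'). (w,w') \<in> \<Union>{T A | A. SigmaPlus A} \<and> (w \<in> S \<phi> \<longrightarrow> w' \<in> S \<psi>)}"
        by blast
    next
      assume "(w,w') \<in> {(w,w'). (w,w') \<in> \<Union>{T A | A. SigmaPlus A} \<and> (w \<in> S \<phi> \<longrightarrow> w' \<in> S \<psi>)}"
      then obtain A where A: "SigmaPlus A" "(w,w') \<in> T A" and c: "w \<in> S \<phi> \<longrightarrow> w' \<in> S \<psi>" by blast
      obtain B where B: "SigmaPlus B" "(w,w') \<in> T B" "\<forall>w \<in> S \<phi>. \<forall>w'. (w, w') \<in> T B \<longrightarrow> w' \<in> S \<psi>"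
      proof (cases "w \<in> S \<phi>")
        case True
        hence w': "w' \<in> S \<psi>" using c by blast
        show ?thesis
        proof (rule that[of "Seq A (Test \<psi>)"])
          show "SigmaPlus (Seq A (Test \<psi>))" using A by (simp add: SigmaPlus.seq SigmaPlus.base)
          show "(w,w') \<in> T (Seq A (Test \<psi>))" using A w' by (simp add: Ts Tt)
          show "\<forall>w \<in> S \<phi>. \<forall>w'. (w, w') \<in> T (Seq A (Test \<psi>)) \<longrightarrow> w' \<in> S \<psi>"
            by (simp add: Ts Tt)
        qed
      next
        case False
        show ?thesis
        proof (rule that[of "Seq (Test (Neg \<phi>)) A"])
          show "SigmaPlus (Seq (Test (Neg \<phi>)) A)" using A by (simp add: SigmaPlus.seq SigmaPlus.base)
          show "(w,w') \<in> T (Seq (Test (Neg \<phi>)) A)" using A False by (simp add: Ts Tt Sn)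
          show "\<forall>w \<in> S \<phi>. \<forall>w'. (w, w') \<in> T (Seq (Test (Neg \<phi>)) A) \<longrightarrow> w' \<in> S \<psi>"
            by (simp add: Ts Tt Sn)
        qed
      qed
      then show "(w,w') \<in> T (Arr \<phi> \<psi>)" unfolding TA by blast
    qed
  qed
qed

theorem mainTheorem4:
  fixes R :: "'a::countable \<Rightarrow> ('w \<times> 'w) set"
    and V :: "'p::countable \<Rightarrow> 'w set"
    and C :: "'i::countable \<Rightarrow> 'w \<Rightarrow> ('w \<times> 'w) set"
    and S :: "('p, 'a, 'i) fm \<Rightarrow> 'w set"
    and T :: "('p, 'a, 'i) prog \<Rightarrow> ('w \<times> 'w) set"
    and \<phi> \<psi> \<theta> :: "('p, 'a, 'i) fm"
  assumes "is_interp R V C S T"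
  shows "S (Box (Arr \<phi> \<psi>) \<theta>)
           = S (Disj (Conj \<phi> (Box Omega (Box (Test \<psi>) \<theta>))) (Box Omega \<theta>))
     \<and> S (Neg (Box (Arr \<phi> \<psi>) \<theta>))
           = S (Disj (Conj (Neg \<phi>) (Neg (Box Omega \<theta>))) (Neg (Box Omega (Box (Test \<psi>) \<theta>))))"
proof -
  note I = assms
  have Tt: "\<And>\<chi> x y. (x,y) \<in> T (Test \<chi>) \<longleftrightarrow> x = y \<and> x \<in> S \<chi>"
    using I unfolding is_interp_def by auto
  have Sn: "\<And>\<chi> w. w \<in> S (Neg \<chi>) \<longleftrightarrow> w \<notin> S \<chi>"
    using I unfolding is_interp_def by simp
  have Sb: "\<And>A \<chi> w. w \<in> S (Box A \<chi>) \<longleftrightarrow> (\<forall>w'. (w, w') \<in> T A \<longrightarrow> w' \<in> S \<chi>)"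
    using I unfolding is_interp_def by simp
  have Si: "\<And>a b w. w \<in> S (Imp a b) \<longleftrightarrow> (w \<in> S a \<longrightarrow> w \<in> S b)"
    unfolding Imp_def Sb Tt by blast
  have Sc: "\<And>a b w. w \<in> S (Conj a b) \<longleftrightarrow> w \<in> S a \<and> w \<in> S b" unfolding Conj_def Si Sn by simp
  have Sd: "\<And>a b w. w \<in> S (Disj a b) \<longleftrightarrow> w \<in> S a \<or> w \<in> S b" unfolding Disj_def Si Sn by blast
  define U where "U = \<Union>{T A | A. SigmaPlus A}"
  have TA: "\<And>\<phi> \<psi> w w'. (w,w') \<in> T (Arr \<phi> \<psi>) \<longleftrightarrow> (w,w') \<in> U \<and> (w \<in> S \<phi> \<longrightarrow> w' \<in> S \<psi>)"
    unfolding U_def arr_char[OF I] by simp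
  have TO: "\<And>w w'. (w,w') \<in> T Omega \<longleftrightarrow> (w,w') \<in> U"
    unfolding Omega_def TA tt_def Si by simp
  have L: "\<And>w. w \<in> S (Box (Arr \<phi> \<psi>) \<theta>) \<longleftrightarrow> (\<forall>w'. (w,w') \<in> U \<and> (w \<in> S \<phi> \<longrightarrow> w' \<in> S \<psi>) \<longrightarrow> w' \<in> S \<theta>)"
    unfolding Sb TA by simp
  have B1: "\<And>w. w \<in> S (Box Omega (Box (Test \<psi>) \<theta>)) \<longleftrightarrow> (\<forall>w'. (w,w') \<in> U \<longrightarrow> w' \<in> S \<psi> \<longrightarrow> w' \<in> S \<theta>)"
    unfolding Sb TO Tt by blast
  have B2: "\<And>w. w \<in> S (Box Omega \<theta>) \<longleftrightarrow> (\<forall>w'. (w,w') \<in> U \<longrightarrow> w' \<in> S \<theta>)"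
    unfolding Sb TO by simp
  show ?thesis
    unfolding set_eq_iff Sd Sc Sn L B1 B2 by blast
qed

end
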